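(* Let $q$ be a prime power, let $d\in\mathbb{Z}_{\geqslant 1}$, let $\mathcal{Q}_d$ be a monic irreducible polynomial in $\mathbb{F}_q[T]$ of degree $d$, and let $s,\ell\in\mathbb{Z}_{\geqslant 0}$ with $0\leqslant \ell<d$. Let $F_0=1$ and $F_i=(-1)^i+(T^{q^i}-T)F_{i-1}$ for $i\in\mathbb{Z}_{\geqslant 1}$. Then $$F_{sd+\ell}\equiv(-1)^{sd}F_\ell \pmod{\mathcal{Q}_d}.$$ *)

theory Defs
  imports "HOL-Computational_Algebra.Polynomial_Factorial" "HOL-Number_Theory.Cong" "HOL-Library.Cardinality"
begin

fun Fpoly :: "nat \<Rightarrow> 'a::{finite,field} poly" where
  "Fpoly 0 = 1"
| "Fpoly (Suc i) = (-1) ^ Suc i + (monom 1 (CARD('a) ^ Suc i) - [:0, 1:]) * Fpoly i"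

end

theory Submission
  imports Defs "HOL-Library.FuncSet"
begin

lemma card_deg_less:
  assumes "d \<ge> 1"
  shows "card {p :: 'a::{finite,field} poly. degree p < d} = CARD('a) ^ d"
    and "finite {p :: 'a::{finite,field} poly. degree p < d}"
proof -
  define g where "g = (\<lambda>f::nat\<Rightarrow>'a. \<Sum>i<d. monom (f i) i)"
  have inj: "inj_on g (PiE {..<d} (\<lambda>_. UNIV))"
  proof (rule inj_onI)
    fix x y :: "nat \<Rightarrow> 'a" assume xy: "x \<in> PiE {..<d} (\<lambda>_. UNIV)" "y \<in> PiE {..<d} (\<lambda>_. UNIV)" "g x = g y"
    have "x j = y j" for j
    proof (cases "j < d")
      case True 
      have "coeff (\<Sum>i<d. monom (x i) i) j = coeff (\<Sum>i<d. monom (y i) i) j" using xy(3) by (simp add: g_def)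
      then show ?thesis using True by (simp add: coeff_sum)
    next
      case False then show ?thesis using xy(1,2) by (auto simp: PiE_def extensional_def)
    qed
    thus "x = y" by auto
  qed
  have img: "g ` (PiE {..<d} (\<lambda>_. UNIV)) = {p. degree p < d}"
  proof
    show "g ` (PiE {..<d} (\<lambda>_. UNIV)) \<subseteq> {p. degree p < d}"
    proof clarify
      fix f :: "nat \<Rightarrow> 'a"
      have "degree (\<Sum>i<d. monom (f i) i) \<le> d - 1"
        by (rule degree_le) (use assms in \<open>auto simp: coeff_sum\<close>)
      thus "degree (g f) < d" using assms unfolding g_def by linarith
    qed
  next
    show "{p. degree p < d} \<subseteq> g ` (PiE {..<d} (\<lambda>_. UNIV))"
    proof clarify
      fix p :: "'a poly" assume p: "degree p < d"
      have e: "g (restrict (coeff p) {..<d}) = p" unfolding g_def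
        by (rule poly_eqI) (use p in \<open>auto simp: coeff_sum coeff_eq_0\<close>)
      show "p \<in> g ` (PiE {..<d} (\<lambda>_. UNIV))"
        by (rule image_eqI[where f=g, OF e[symmetric]]) auto
    qed
  qed
  have fin: "finite (PiE {..<d::nat} (\<lambda>_. UNIV :: 'a set))" by (rule finite_PiE) auto
  have "card {p :: 'a poly. degree p < d} = card (PiE {..<d} (\<lambda>_. UNIV :: 'a set))"
    using card_image[OF inj] img by (metis (no_types, lifting))
  also have "\<dots> = CARD('a) ^ d" by (simp add: card_PiE)
  finally show "card {p :: 'a poly. degree p < d} = CARD('a) ^ d" .
  show "finite {p :: 'a::{finite,field} poly. degree p < d}"
    using finite_imageI[OF fin, of g] img by simp
qed

lemma not_dvd_prod:
  fixes Q :: "'a::field poly"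
  assumes "prime_elem Q" "finite S" "\<And>x. x \<in> S \<Longrightarrow> \<not> Q dvd x"
  shows "\<not> Q dvd prod id S"
  using assms(2,3)
proof (induction S rule: finite_induct)
  case empty
  then show ?case using assms(1) by (simp add: prime_elem_def)
next
  case (insert x F)
  then show ?case using assms(1) by (simp add: prime_elem_dvd_mult_iff)
qed

lemma fermat_poly:
  fixes Q :: "'a::{finite,field} poly"
  assumes irr: "irreducible Q" and dQ: "degree Q = d" and d1: "d \<ge> 1"
  shows "[a ^ (CARD('a) ^ d) = a] (mod Q)"
proof -
  have pQ: "prime_elem Q" using irr by (rule field_poly_irreducible_imp_prime)
  have Q0: "Q \<noteq> 0" using dQ d1 by auto
  have qpos: "CARD('a) ^ d > 0" by simp
  show ?thesis
  proof (cases "Q dvd a")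
    case True
    have "[a ^ (CARD('a) ^ d) = 0] (mod Q)"
      using True qpos by (metis cong_0_iff dvd_power dvd_trans)
    moreover have "[a = 0] (mod Q)" using True by (simp add: cong_0_iff)
    ultimately show ?thesis by (meson cong_sym cong_trans)
  next
    case False
    define S where "S = {p :: 'a poly. degree p < d} - {0}"
    have finS: "finite S" using card_deg_less(2)[OF d1, where ?'a='a] by (simp add: S_def)
    have cardS: "card S = CARD('a) ^ d - 1"
    proof -
      have "(0::'a poly) \<in> {p. degree p < d}" using d1 by simp
      thus ?thesis using card_deg_less[OF d1, where ?'a='a] by (simp add: S_def card_Diff_singleton)
    qed
    have nd: "\<not> Q dvd x" if "x \<in> S" for x
    proof
      assume "Q dvd x"
      moreover have "x \<noteq> 0" "degree x < degree Q" using that dQ by (auto simp: S_def)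
      ultimately have "degree Q \<le> degree x" by (intro dvd_imp_degree_le)
      thus False using \<open>degree x < degree Q\<close> by simp
    qed
    define f where "f = (\<lambda>x. (a * x) mod Q)"
    have maps: "f x \<in> S" if "x \<in> S" for x
    proof -
      have "\<not> Q dvd a * x" using False nd[OF that] pQ by (simp add: prime_elem_dvd_mult_iff)
      hence "f x \<noteq> 0" by (simp add: f_def mod_eq_0_iff_dvd)
      moreover have "degree (f x) < d" using degree_mod_less'[OF Q0 \<open>f x \<noteq> 0\<close>[unfolded f_def]] dQ
        by (simp add: f_def)
      ultimately show ?thesis by (simp add: S_def)
    qed
    have inj: "inj_on f S"
    proof (rule inj_onI)
      fix x y assume xy: "x \<in> S" "y \<in> S" "f x = f y"
      hence "[a * x = a * y] (mod Q)" by (simp add: f_def cong_def)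
      hence "Q dvd a * (x - y)" by (simp add: cong_iff_dvd_diff right_diff_distrib)
      hence dv: "Q dvd x - y" using False pQ by (simp add: prime_elem_dvd_mult_iff)
      show "x = y"
      proof (rule ccontr)
        assume "x \<noteq> y"
        hence "x - y \<noteq> 0" by simp
        moreover have "degree (x - y) < d"
          using degree_diff_le_max[of x y] xy(1,2) by (auto simp: S_def)
        ultimately have "x - y \<in> S" by (simp add: S_def)
        thus False using nd dv by blast
      qed
    qed
    have img: "f ` S = S" proof (rule endo_inj_surj[OF finS _ inj])
      show "f ` S \<subseteq> S" using maps by (simp add: image_subset_iff)
    qed
    have "prod id S = prod id (f ` S)" using img by simp
    also have "\<dots> = prod f S" using prod.reindex[OF inj, of id] by simp
    finally have eq1: "prod id S = prod f S" .
    have "[prod f S = prod (\<lambda>x. a * x) S] (mod Q)"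
      by (rule cong_prod) (simp add: f_def)
    also have "prod (\<lambda>x. a * x) S = a ^ card S * prod id S"
      by (simp add: prod.distrib)
    finally have "[a ^ card S * prod id S = 1 * prod id S] (mod Q)"
      using eq1 by (simp add: cong_sym)
    hence "Q dvd (a ^ card S - 1) * prod id S"
      by (simp add: cong_iff_dvd_diff left_diff_distrib)
    hence "Q dvd a ^ card S - 1"
      using not_dvd_prod[OF pQ finS nd] pQ by (simp add: prime_elem_dvd_mult_iff)
    hence "[a ^ card S = 1] (mod Q)" by (simp add: cong_iff_dvd_diff)
    hence "[a * a ^ card S = a * 1] (mod Q)" by (rule cong_scalar_left)
    moreover have "a * a ^ card S = a ^ (CARD('a) ^ d)"
    proof -
      have "Suc (card S) = CARD('a) ^ d" using cardS qpos by simp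
      thus ?thesis by (metis power_Suc)
    qed
    ultimately show ?thesis by simp
  qed
qed

lemma fermat_iter:
  fixes Q :: "'a::{finite,field} poly"
  assumes irr: "irreducible Q" and dQ: "degree Q = d" and d1: "d \<ge> 1"
  shows "[a ^ (CARD('a) ^ (s * d)) = a] (mod Q)"
proof (induction s)
  case 0
  then show ?case by simp
next
  case (Suc s)
  have "a ^ (CARD('a) ^ (Suc s * d)) = (a ^ (CARD('a) ^ d)) ^ (CARD('a) ^ (s * d))"
    by (simp add: power_add power_mult[symmetric] mult.commute)
  also have "[\<dots> = a ^ (CARD('a) ^ (s * d))] (mod Q)"
    by (rule cong_pow) (rule fermat_poly[OF irr dQ d1])
  finally show ?case using Suc.IH by (rule cong_trans)
qed

lemma X_cong:
  fixes Q :: "'a::{finite,field} poly"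
  assumes irr: "irreducible Q" and dQ: "degree Q = d" and d1: "d \<ge> 1"
  shows "[monom 1 (CARD('a) ^ (s * d + i)) = (monom 1 (CARD('a) ^ i) :: 'a poly)] (mod Q)"
proof -
  have "monom 1 (CARD('a) ^ (s * d + i)) = (monom 1 (CARD('a) ^ i) :: 'a poly) ^ (CARD('a) ^ (s * d))"
    by (simp add: monom_power power_add mult.commute)
  thus ?thesis using fermat_iter[OF irr dQ d1] by simp
qed

theorem lemma3p1:
  fixes Q :: "'a::{finite,field} poly" and d s l :: nat
  assumes "d \<ge> 1"
    and "lead_coeff Q = 1"
    and "irreducible Q"
    and "degree Q = d"
    and "l < d"
  shows "[Fpoly (s * d + l) = (-1) ^ (s * d) * (Fpoly l :: 'a poly)] (mod Q)"
proof -
  note XC = X_cong[OF assms(3) assms(4) assms(1)]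
  have base: "[Fpoly (s * d) = (-1) ^ (s * d) * (Fpoly 0 :: 'a poly)] (mod Q)"
  proof (cases "s * d")
    case 0
    then show ?thesis by (metis Fpoly.simps(1) power_0 mult_1 cong_refl)
  next
    case (Suc m)
    have "[monom 1 (CARD('a) ^ (s * d + 0)) = (monom 1 (CARD('a) ^ 0) :: 'a poly)] (mod Q)"
      by (rule XC)
    hence "[monom 1 (CARD('a) ^ Suc m) - [:0, 1:] = (0 :: 'a poly)] (mod Q)"
      using Suc by (simp add: cong_iff_dvd_diff monom_altdef)
    hence "[(monom 1 (CARD('a) ^ Suc m) - [:0, 1:]) * Fpoly m = (0 :: 'a poly) * Fpoly m] (mod Q)"
      by (rule cong_scalar_right)
    hence "[(-1) ^ Suc m + (monom 1 (CARD('a) ^ Suc m) - [:0, 1:]) * Fpoly m = (-1) ^ Suc m + (0 :: 'a poly)] (mod Q)"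
      by (intro cong_add) auto
    then show ?thesis using Suc by simp
  qed
  have "[Fpoly (s * d + l) = (-1) ^ (s * d) * (Fpoly l :: 'a poly)] (mod Q)" for l
  proof (induction l)
    case 0
    then show ?case using base by simp
  next
    case (Suc l)
    have h1: "[monom 1 (CARD('a) ^ Suc (s * d + l)) - [:0, 1:] = (monom 1 (CARD('a) ^ Suc l) - [:0, 1:] :: 'a poly)] (mod Q)"
      using XC[of s "Suc l"] by (intro cong_diff) auto
    have "[(monom 1 (CARD('a) ^ Suc (s * d + l)) - [:0, 1:]) * Fpoly (s * d + l)
          = (monom 1 (CARD('a) ^ Suc l) - [:0, 1:]) * ((-1) ^ (s * d) * (Fpoly l :: 'a poly))] (mod Q)"
      by (rule cong_mult[OF h1 Suc.IH])
    hence "[(-1) ^ Suc (s * d + l) + (monom 1 (CARD('a) ^ Suc (s * d + l)) - [:0, 1:]) * Fpoly (s * d + l)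
          = (-1) ^ Suc (s * d + l) + (monom 1 (CARD('a) ^ Suc l) - [:0, 1:]) * ((-1) ^ (s * d) * (Fpoly l :: 'a poly))] (mod Q)"
      by (intro cong_add) auto
    moreover have "(-1) ^ Suc (s * d + l) + (monom 1 (CARD('a) ^ Suc l) - [:0, 1:]) * ((-1) ^ (s * d) * (Fpoly l :: 'a poly))
        = (-1) ^ (s * d) * Fpoly (Suc l)"
      by (simp add: power_add algebra_simps)
    ultimately show ?case by simp
  qed
  thus ?thesis .
qed

end
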